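(* Let $q$ be a prime power and let $f(T)\in\mathbb{F}_q[T]$ be a monic polynomial of degree $d$ such that $D^2f\neq 0$, $\deg f'\ge 1$, and the polynomials $\widetilde{f}(x,y)-f'(x)$ and $\widetilde{f'}(x,y)$ have no common factor other than possibly a power of $x-y$. Then for all but at most $d^2-2d$ values of $s\in\overline{\mathbb{F}_q}$, there exists $b\in\overline{\mathbb{F}_q}$ such that the polynomial $f(T)+sT+b$ has, over $\overline{\mathbb{F}_q}$, exactly one root of multiplicity $2$ and $d-2$ simple roots (and no other roots).
   Context: $\widetilde{f}(x,y)$ is defined by $f(x)-f(y)=(x-y)\widetilde{f}(x,y)$ (and similarly $\widetilde{f'}$ for the derivative $f'$). The $j$-th Hasse derivative of $f=\sum_i a_iT^i$ is $D^jf=\sum_i\binom{i}{j}a_iT^{i-j}$. *)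

theory Defs
  imports "HOL-Computational_Algebra.Polynomial"
begin

definition hasse_deriv :: "nat \<Rightarrow> 'a::comm_ring_1 poly \<Rightarrow> 'a poly" where
  "hasse_deriv j f = (\<Sum>i\<le>degree f. monom (of_nat (i choose j) * coeff f i) (i - j))"

text \<open>Bivariate polynomials in x,y are represented as 'a poly poly:
  the outer variable is y, the coefficients are polynomials in x.\<close>
definition bvar_x :: "'a::comm_ring_1 poly poly" where
  "bvar_x = [: [:0, 1:] :]"

definition bvar_y :: "'a::comm_ring_1 poly poly" where
  "bvar_y = [: 0, 1 :]"

definition in_x :: "'a::comm_ring_1 poly \<Rightarrow> 'a poly poly" where
  "in_x f = [: f :]"

definition in_y :: "'a::comm_ring_1 poly \<Rightarrow> 'a poly poly" where
  "in_y f = map_poly (\<lambda>c. [:c:]) f"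

text \<open>f~(x,y) defined by f(x) - f(y) = (x - y) f~(x,y) (exact division)\<close>
definition tilde :: "'a::field poly \<Rightarrow> 'a poly poly" where
  "tilde f = (in_x f - in_y f) div (bvar_x - bvar_y)"

end

theory Submission imports Defs "Subresultants.Subresultant_Gcd" "HOL-Computational_Algebra.Field_as_Ring" begin


typedef 'a fg = "UNIV :: 'a set" morphisms rep_fg abs_fg by auto
setup_lifting type_definition_fg

instantiation fg :: (field) field
begin
lift_definition zero_fg :: "'a fg" is 0 .
lift_definition one_fg :: "'a fg" is 1 .
lift_definition plus_fg :: "'a fg \<Rightarrow> 'a fg \<Rightarrow> 'a fg" is "(+)" .
lift_definition minus_fg :: "'a fg \<Rightarrow> 'a fg \<Rightarrow> 'a fg" is "(-)" .
lift_definition uminus_fg :: "'a fg \<Rightarrow> 'a fg" is "uminus" .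
lift_definition times_fg :: "'a fg \<Rightarrow> 'a fg \<Rightarrow> 'a fg" is "(*)" .
lift_definition inverse_fg :: "'a fg \<Rightarrow> 'a fg" is "inverse" .
lift_definition divide_fg :: "'a fg \<Rightarrow> 'a fg \<Rightarrow> 'a fg" is "(/)" .
instance by intro_classes (transfer, simp add: ring_distribs divide_inverse mult.assoc add.assoc)+
end

instantiation fg :: (field)
  "{unique_euclidean_ring, normalization_euclidean_semiring, normalization_semidom_multiplicative}"
begin
definition [simp]: "normalize_fg = (normalize_field :: 'a fg \<Rightarrow> _)"
definition [simp]: "unit_factor_fg = (unit_factor_field :: 'a fg \<Rightarrow> _)"
definition [simp]: "modulo_fg = (mod_field :: 'a fg \<Rightarrow> _)"
definition [simp]: "euclidean_size_fg = (euclidean_size_field :: 'a fg \<Rightarrow> _)"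
definition [simp]: "division_segment (x :: 'a fg) = 1"
instance
  by standard
    (simp_all add: dvd_field_iff field_split_simps split: if_splits)
end

instantiation fg :: (field) euclidean_ring_gcd
begin
definition gcd_fg :: "'a fg \<Rightarrow> 'a fg \<Rightarrow> 'a fg" where
  "gcd_fg = Euclidean_Algorithm.gcd"
definition lcm_fg :: "'a fg \<Rightarrow> 'a fg \<Rightarrow> 'a fg" where
  "lcm_fg = Euclidean_Algorithm.lcm"
definition Gcd_fg :: "'a fg set \<Rightarrow> 'a fg" where
 "Gcd_fg = Euclidean_Algorithm.Gcd"
definition Lcm_fg :: "'a fg set \<Rightarrow> 'a fg" where
 "Lcm_fg = Euclidean_Algorithm.Lcm"
instance by standard (simp_all add: gcd_fg_def lcm_fg_def Gcd_fg_def Lcm_fg_def)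
end

instance fg :: (field) field_gcd ..

lemma abs_fg_hom: "inj_comm_ring_hom (abs_fg :: 'a::field \<Rightarrow> 'a fg)"
  by unfold_locales
    (simp_all add: rep_fg_inject[symmetric] plus_fg.rep_eq times_fg.rep_eq one_fg.rep_eq
      zero_fg.rep_eq abs_fg_inverse)

lemma rep_fg_hom: "inj_comm_ring_hom (rep_fg :: 'a::field fg \<Rightarrow> 'a)"
  by unfold_locales
    (simp_all add: rep_fg_inject plus_fg.rep_eq times_fg.rep_eq one_fg.rep_eq zero_fg.rep_eq,
     metis rep_fg_inject zero_fg.rep_eq)

interpretation AF0: inj_comm_ring_hom "abs_fg :: 'a::field \<Rightarrow> 'a fg"
  by (rule abs_fg_hom)
interpretation AF1: map_poly_inj_comm_ring_hom "abs_fg :: 'a::field \<Rightarrow> 'a fg"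
  by (rule map_poly_inj_comm_ring_hom.intro, rule abs_fg_hom)
interpretation AF2: map_poly_inj_comm_ring_hom "map_poly (abs_fg :: 'a::field \<Rightarrow> 'a fg)"
  by (rule map_poly_inj_comm_ring_hom.intro, rule AF1.inj_comm_ring_hom_axioms)
interpretation RF1: map_poly_inj_comm_ring_hom "rep_fg :: 'a::field fg \<Rightarrow> 'a"
  by (rule map_poly_inj_comm_ring_hom.intro, rule rep_fg_hom)
interpretation RF2: map_poly_inj_comm_ring_hom "map_poly (rep_fg :: 'a::field fg \<Rightarrow> 'a)"
  by (rule map_poly_inj_comm_ring_hom.intro, rule RF1.inj_comm_ring_hom_axioms)

lemma RA1: "map_poly rep_fg (map_poly abs_fg p) = (p :: 'a::field poly)"
  by (simp add: map_poly_map_poly o_def abs_fg_inverse)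
lemma AR1: "map_poly abs_fg (map_poly rep_fg p) = (p :: 'a::field fg poly)"
  by (simp add: map_poly_map_poly o_def rep_fg_inverse)
lemma RA2: "map_poly (map_poly rep_fg) (map_poly (map_poly abs_fg) p) = (p :: 'a::field poly poly)"
  by (simp add: map_poly_map_poly o_def RA1)
lemma AR2: "map_poly (map_poly abs_fg) (map_poly (map_poly rep_fg) p) = (p :: 'a::field fg poly poly)"
  by (simp add: map_poly_map_poly o_def AR1)

lemma irreducible_transfer:
  fixes p :: "'a::field fg poly poly"
  assumes "irreducible p"
  shows "irreducible (map_poly (map_poly rep_fg) p)"
proof -
  let ?R = "map_poly (map_poly rep_fg) :: 'a fg poly poly \<Rightarrow> 'a poly poly"
  let ?A = "map_poly (map_poly abs_fg) :: 'a poly poly \<Rightarrow> 'a fg poly poly"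
  show ?thesis unfolding irreducible_def
  proof (intro conjI allI impI)
    show "?R p \<noteq> 0" using assms by auto
    show "\<not> is_unit (?R p)"
    proof
      assume "is_unit (?R p)"
      hence "is_unit (?A (?R p))" by (rule AF2.hom_dvd_1)
      thus False using assms by (simp add: AR2 irreducible_not_unit)
    qed
    fix a b assume "?R p = a * b"
    hence "?A (?R p) = ?A a * ?A b" by (simp add: AF2.hom_mult)
    hence "p = ?A a * ?A b" by (simp add: AR2)
    hence "is_unit (?A a) \<or> is_unit (?A b)" using assms by (simp add: irreducible_def)
    thus "is_unit a \<or> is_unit b"
      by (metis RA2 RF2.hom_dvd_1)
  qed
qed

lemma resultant_nonzero_no_common:
  fixes A B :: "'a::field poly poly"
  assumes "\<And>h. irreducible h \<Longrightarrow> h dvd A \<Longrightarrow> h dvd B \<Longrightarrow> False"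
  shows "resultant A B \<noteq> 0"
proof
  assume R0: "resultant A B = 0"
  let ?R = "map_poly (map_poly rep_fg) :: 'a fg poly poly \<Rightarrow> 'a poly poly"
  let ?A = "map_poly (map_poly abs_fg) :: 'a poly poly \<Rightarrow> 'a fg poly poly"
  have "resultant (?A A) (?A B) = map_poly abs_fg (resultant A B)"
    by (rule AF1.resultant_hom)
  hence "resultant (?A A) (?A B) = 0" using R0 by simp
  hence dg: "degree (gcd (?A A) (?A B)) \<noteq> 0" by (simp add: resultant_0_gcd)
  define G where "G = gcd (?A A) (?A B)"
  have G0: "G \<noteq> 0" using dg G_def by auto
  have GU: "\<not> is_unit G" using dg G_def by (auto simp: is_unit_iff_degree)
  obtain q where q: "q dvd G" "prime q" using prime_divisor_exists[OF G0 GU] by blast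
  have irr: "irreducible q" using q(2) by (simp add: prime_elem_imp_irreducible prime_imp_prime_elem)
  have "q dvd ?A A" "q dvd ?A B" using q(1) G_def dvd_trans by auto
  hence "?R q dvd ?R (?A A)" "?R q dvd ?R (?A B)" by (auto intro: RF2.hom_dvd)
  hence "?R q dvd A" "?R q dvd B" by (simp_all add: RA2)
  thus False using assms irreducible_transfer[OF irr] by blast
qed

lemma resultant_common_root:
  fixes a b :: "'b::field poly"
  assumes "a \<noteq> 0" "poly a z = 0" "poly b z = 0"
  shows "resultant a b = 0"
proof -
  let ?A = "map_poly abs_fg :: 'b poly \<Rightarrow> 'b fg poly"
  have "poly (?A a) (abs_fg z) = 0" "poly (?A b) (abs_fg z) = 0"
    using assms by (simp_all add: AF0.poly_map_poly)
  hence "[:-abs_fg z, 1:] dvd ?A a" "[:-abs_fg z, 1:] dvd ?A b"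
    by (metis poly_eq_0_iff_dvd)+
  hence d: "[:-abs_fg z, 1:] dvd gcd (?A a) (?A b)" by simp
  have "gcd (?A a) (?A b) \<noteq> 0" using assms(1) by simp
  hence "degree (gcd (?A a) (?A b)) \<noteq> 0"
    using dvd_imp_degree_le[OF d] by auto
  hence "resultant (?A a) (?A b) = 0" by (simp add: resultant_0_gcd)
  moreover have "resultant (?A a) (?A b) = abs_fg (resultant a b)"
    by (rule abs_fg_hom[THEN inj_comm_ring_hom.resultant_hom])
  ultimately show ?thesis by simp
qed



lemma coeff_hasse: "coeff (hasse_deriv j f) k = of_nat ((k+j) choose j) * coeff f (k+j)"
proof -
  have "coeff (hasse_deriv j f) k =
     (\<Sum>i\<le>degree f. if i - j = k then of_nat (i choose j) * coeff f i else 0)"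
    by (simp add: hasse_deriv_def coeff_sum coeff_monom)
  also have "\<dots> = (\<Sum>i\<le>degree f. if i = k + j then of_nat (i choose j) * coeff f i else 0)"
  proof (rule sum.cong[OF refl])
    fix i show "(if i - j = k then of_nat (i choose j) * coeff f i else 0) =
      (if i = k + j then of_nat (i choose j) * coeff f i else 0)"
      by (cases "j \<le> i") (auto simp: binomial_eq_0)
  qed
  also have "\<dots> = (if k + j \<le> degree f then of_nat ((k+j) choose j) * coeff f (k+j) else 0)"
    by (simp add: sum.delta)
  finally show ?thesis using coeff_eq_0[of f "k+j"] by auto
qed

lemma degree_hasse: "degree (hasse_deriv j f) \<le> degree f - j"
  by (rule degree_le) (auto simp: coeff_hasse coeff_eq_0)

lemma hasse_map:
  assumes "comm_ring_hom h"
  shows "hasse_deriv j (map_poly h f) = map_poly h (hasse_deriv j f)"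
proof -
  interpret comm_ring_hom h by fact
  show ?thesis by (rule poly_eqI) (simp add: coeff_hasse hom_distribs)
qed

lemma coeff_lin_pow: "coeff ([:r,1:]^i) j = of_nat (i choose j) * (r::'a::comm_ring_1)^(i-j)"
proof (induction i arbitrary: j)
  case 0
  then show ?case by (cases j) auto
next
  case (Suc i)
  have e: "[:r,1:]^Suc i = Polynomial.smult r ([:r,1:]^i) + pCons 0 ([:r,1:]^i)" by simp
  show ?case
  proof (cases j)
    case 0
    then show ?thesis unfolding e using Suc by simp
  next
    case (Suc j')
    have "coeff ([:r,1:]^Suc i) j = r * (of_nat (i choose Suc j') * r^(i - Suc j'))
        + of_nat (i choose j') * r^(i-j')"
      unfolding e using Suc.IH Suc by simp
    also have "\<dots> = of_nat (Suc i choose j) * r^(Suc i - j)"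
    proof (cases "Suc j' \<le> i")
      case True
      hence "i - j' = Suc (i - Suc j')" by simp
      thus ?thesis using Suc by (simp add: algebra_simps)
    next
      case False
      have c0: "i choose Suc j' = 0" using False by (simp add: binomial_eq_0)
      have c1: "Suc i choose j = i choose j'" using c0 Suc by simp
      have c2: "Suc i - j = i - j'" using Suc by simp
      show ?thesis unfolding c1 c2 c0 by simp
    qed
    finally show ?thesis .
  qed
qed

lemma taylor_hasse:
  fixes p :: "'a::comm_ring_1 poly"
  shows "poly (hasse_deriv j p) r = coeff (pcompose p [:r,1:]) j"
proof -
  have "poly (hasse_deriv j p) r = (\<Sum>i\<le>degree p. of_nat (i choose j) * coeff p i * r^(i-j))"
    by (simp add: hasse_deriv_def poly_sum poly_monom)
  also have "\<dots> = (\<Sum>i\<le>degree p. coeff p i * coeff ([:r,1:]^i) j)"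
    unfolding coeff_lin_pow by (simp add: algebra_simps)
  also have "\<dots> = coeff (\<Sum>i\<le>degree p. Polynomial.smult (coeff p i) ([:r,1:]^i)) j"
    by (simp add: coeff_sum)
  also have "(\<Sum>i\<le>degree p. Polynomial.smult (coeff p i) ([:r,1:]^i)) = pcompose p [:r,1:]"
  proof -
    have "pcompose p [:r,1:] = pcompose (\<Sum>i\<le>degree p. monom (coeff p i) i) [:r,1:]"
      by (simp add: poly_as_sum_of_monoms)
    also have "\<dots> = (\<Sum>i\<le>degree p. pcompose (monom (coeff p i) i) [:r,1:])"
      by (rule pcompose_sum)
    also have "\<dots> = (\<Sum>i\<le>degree p. Polynomial.smult (coeff p i) ([:r,1:]^i))"
    proof (rule sum.cong[OF refl])
      fix i
      have "monom (coeff p i) i = Polynomial.smult (coeff p i) ([:0,1:]^i)"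
        by (simp add: monom_altdef)
      moreover have "pcompose ([:0,1:]^i) [:r,1:] = [:r,1:]^i"
        by (induction i) (simp_all add: pcompose_mult pcompose_pCons)
      ultimately show "pcompose (monom (coeff p i) i) [:r,1:] = Polynomial.smult (coeff p i) ([:r,1:]^i)"
        by (simp add: pcompose_smult)
    qed
    finally show ?thesis by simp
  qed
  finally show ?thesis .
qed

lemma order_ge2I:
  fixes p :: "'a::idom poly"
  assumes "p \<noteq> 0" "poly p r = 0" "poly (pderiv p) r = 0"
  shows "2 \<le> order r p"
proof -
  obtain q where q: "p = [:-r,1:] * q" using assms(2) poly_eq_0_iff_dvd by (metis dvdE)
  have "pderiv p = [:-r,1:] * pderiv q + q" unfolding q
    by (simp add: pderiv_mult pderiv_pCons del: mult_pCons_left)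
  hence "poly q r = 0" using assms(3) by simp
  then obtain k where k: "q = [:-r,1:] * k" using poly_eq_0_iff_dvd by (metis dvdE)
  have "[:-r,1:]^2 dvd p" unfolding q k by (metis dvd_triv_left mult.assoc power2_eq_square)
  thus ?thesis using assms(1) order_divides by blast
qed

lemma order_ge2D:
  fixes p :: "'a::idom poly"
  assumes "p \<noteq> 0" "2 \<le> order r p"
  shows "poly p r = 0 \<and> poly (pderiv p) r = 0"
proof -
  have "[:-r,1:]^2 dvd p" using assms order_divides by blast
  then obtain k where k: "p = [:-r,1:] * ([:-r,1:] * k)"
    by (metis dvdE power2_eq_square mult.assoc)
  show ?thesis unfolding k by (simp add: pderiv_mult pderiv_pCons del: mult_pCons_left)
qed

lemma order_ge3D:
  fixes p :: "'a::idom poly"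
  assumes "p \<noteq> 0" "3 \<le> order r p"
  shows "coeff (pcompose p [:r,1:]) 2 = 0"
proof -
  have "[:-r,1:]^3 dvd p" using assms order_divides by blast
  then obtain k where k: "p = [:-r,1:]^3 * k" by (metis dvdE)
  have "pcompose [:-r,1:] [:r,1:] = [:0,1:]" by (simp add: pcompose_pCons)
  hence "pcompose p [:r,1:] = [:0,1:]^3 * pcompose k [:r,1:]"
    unfolding k by (simp add: pcompose_mult pcompose_hom.hom_power)
  also have "[:0,1:]^3 = (monom 1 3 :: 'a poly)" by (simp add: monom_altdef)
  finally show ?thesis by (simp add: coeff_monom_mult)
qed

lemma size_proots_alg_closed:
  fixes p :: "'b::field poly"
  assumes ac: "\<And>p :: 'b poly. degree p \<ge> 1 \<Longrightarrow> \<exists>z. poly p z = 0"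
    and "p \<noteq> 0"
  shows "size (proots p) = degree p"
  using assms(2)
proof (induction "degree p" arbitrary: p rule: less_induct)
  case (less p)
  show ?case
  proof (cases "degree p = 0")
    case True
    then obtain c where "p = [:c:]" by (rule degree_eq_zeroE)
    thus ?thesis using True by simp
  next
    case False
    then obtain z where "poly p z = 0" using ac by force
    then obtain q where q: "p = [:-z,1:] * q" using poly_eq_0_iff_dvd by (metis dvdE)
    have q0: "q \<noteq> 0" using less.prems q by auto
    have dq: "degree p = Suc (degree q)" unfolding q using q0 by (subst degree_mult_eq) auto
    have "size (proots q) = degree q" using less.hyps[of q] dq q0 by simp
    moreover have "proots p = proots [:-z,1:] + proots q" unfolding q
      by (rule proots_mult) (use q0 in auto)
    moreover have "proots [:-z,1:] = {#z#}" by (metis proots_linear_factor minus_minus)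
    ultimately show ?thesis using dq by simp
  qed
qed

lemma sum_orders_alg_closed:
  fixes p :: "'b::field poly"
  assumes ac: "\<And>p :: 'b poly. degree p \<ge> 1 \<Longrightarrow> \<exists>z. poly p z = 0"
    and "p \<noteq> 0"
  shows "(\<Sum>z\<in>{z. poly p z = 0}. order z p) = degree p"
proof -
  have "size (proots p) = (\<Sum>z\<in>set_mset (proots p). count (proots p) z)"
    by (rule size_multiset_overloaded_eq)
  also have "\<dots> = (\<Sum>z\<in>{z. poly p z = 0}. order z p)" using assms(2) by simp
  finally show ?thesis using size_proots_alg_closed[OF ac assms(2)] by simp
qed



definition TD :: "'a::zero poly poly \<Rightarrow> nat \<Rightarrow> bool" where
  "TD P D \<longleftrightarrow> (\<forall>i j. coeff (coeff P j) i \<noteq> 0 \<longrightarrow> i + j \<le> D)"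

lemma poly2_eqI:
  assumes "\<And>i j. coeff (coeff P j) i = coeff (coeff Q j) i"
  shows "P = Q"
  using assms by (intro poly_eqI) auto

definition tl2 :: "'a::comm_ring_1 poly \<Rightarrow> 'a poly poly" where
  "tl2 f = (\<Sum>j<degree f. monom (\<Sum>i<degree f - j. monom (coeff f (i+j+1)) i) j)"

lemma coeff_tl2: "coeff (coeff (tl2 f) j) i = coeff f (i+j+1)"
proof -
  have "coeff (coeff (tl2 f) j) i =
     (\<Sum>j'<degree f. if j' = j then (\<Sum>i'<degree f - j'. if i' = i then coeff f (i'+j'+1) else 0) else 0)"
    by (simp add: tl2_def coeff_sum coeff_monom)
  also have "\<dots> = (if j < degree f then (if i < degree f - j then coeff f (i+j+1) else 0) else 0)"
    by (simp add: sum.delta')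
  also have "\<dots> = coeff f (i+j+1)"
    using coeff_eq_0[of f "i+j+1"] by auto
  finally show ?thesis .
qed

definition XY :: "'a::comm_ring_1 poly poly" where "XY = bvar_x - bvar_y"

lemma XY_eq: "XY = [:[:0,1:], -1:]"
  unfolding XY_def bvar_x_def bvar_y_def
  by (rule poly_eqI) (simp add: coeff_pCons split: nat.splits)

lemma coeff_XY_mult:
  "coeff (coeff (XY * Q) j) i =
     (case i of 0 \<Rightarrow> 0 | Suc i' \<Rightarrow> coeff (coeff Q j) i') -
     (case j of 0 \<Rightarrow> 0 | Suc j' \<Rightarrow> coeff (coeff Q j') i)"
proof -
  have "XY * Q = Polynomial.smult [:0,1:] Q - pCons 0 Q" by (simp add: XY_eq algebra_simps)
  thus ?thesis by (cases i; cases j) (simp_all add: coeff_pCons)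
qed

lemma XY_mult_tl2: "XY * tl2 f = in_x f - in_y f"
proof (rule poly2_eqI)
  fix i j
  show "coeff (coeff (XY * tl2 f) j) i = coeff (coeff (in_x f - in_y f) j) i"
    unfolding coeff_XY_mult coeff_tl2
    by (cases i; cases j) (simp_all add: in_x_def in_y_def coeff_map_poly coeff_pCons)
qed

lemma XY_nonzero: "XY \<noteq> (0 :: 'a::comm_ring_1 poly poly)"
  by (simp add: XY_eq)

lemma tilde_eq: "tilde f = tl2 (f :: 'a::field poly)"
proof -
  have "tilde f = (XY * tl2 f) div XY" using XY_mult_tl2[of f] unfolding tilde_def XY_def by simp
  thus ?thesis using nonzero_mult_div_cancel_left[OF XY_nonzero] by simp
qed

lemma coeff_tilde: "coeff (coeff (tilde f) j) i = coeff (f :: 'a::field poly) (i+j+1)"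
  by (simp add: tilde_eq coeff_tl2)

lemma TD_tilde: "TD (tilde f) (degree f - 1)"
  unfolding TD_def coeff_tilde using le_degree by fastforce

lemma coeff_tilde_top: "degree f \<ge> 1 \<Longrightarrow> coeff (tilde f) (degree f - 1) = [:lead_coeff (f::'a::field poly):]"
  by (rule poly_eqI) (auto simp: coeff_tilde coeff_pCons coeff_eq_0 split: nat.splits)

lemma coeff_tilde_high: "j \<ge> degree f \<Longrightarrow> coeff (tilde f) j = (0::'a::field poly)"
  by (rule poly_eqI) (auto simp: coeff_tilde coeff_eq_0)

lemma degree_tilde: "degree f \<ge> 1 \<Longrightarrow> degree (tilde f) = degree (f::'a::field poly) - 1"
proof -
  assume d: "degree f \<ge> 1"
  have "f \<noteq> 0" using d by auto
  hence "coeff (tilde f) (degree f - 1) \<noteq> 0" using coeff_tilde_top[OF d] by simp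
  hence "degree (tilde f) \<ge> degree f - 1" by (rule le_degree)
  moreover have "degree (tilde f) \<le> degree f - 1"
    by (rule degree_le) (auto intro!: coeff_tilde_high)
  ultimately show ?thesis by simp
qed

lemma lead_tilde: assumes d: "degree f \<ge> 1" shows "lead_coeff (tilde f) = [:lead_coeff (f::'a::field poly):]"
proof -
  have "degree (tilde f) = degree f - 1" by (rule degree_tilde[OF d])
  thus ?thesis using coeff_tilde_top[OF d] by metis
qed

lemma TD_degree: "TD P D \<Longrightarrow> degree P \<le> D"
proof -
  assume T: "TD P D"
  show ?thesis
  proof (cases "P = 0")
    case False
    hence "lead_coeff P \<noteq> 0" by simp
    hence "coeff (lead_coeff P) (degree (lead_coeff P)) \<noteq> 0" by simp
    then obtain i where "coeff (lead_coeff P) i \<noteq> 0" by blast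
    thus ?thesis using T unfolding TD_def by fastforce
  qed simp
qed

lemma TD_mono: "TD P D \<Longrightarrow> D \<le> D' \<Longrightarrow> TD P D'"
  unfolding TD_def by force

lemma TD_XY_div: assumes "TD (XY * Q) (Suc D)" shows "TD Q D"
proof -
  have c: "\<And>i j. Suc i + j > Suc D \<Longrightarrow> coeff (coeff (XY * Q) j) (Suc i) = 0"
    using assms unfolding TD_def by (meson not_le)
  have "\<forall>i. i + j > D \<longrightarrow> coeff (coeff Q j) i = 0" for j
  proof (induction j)
    case 0
    show ?case using c[of _ 0] unfolding coeff_XY_mult by simp
  next
    case (Suc j)
    show ?case
    proof (intro allI impI)
      fix i assume "i + Suc j > D"
      hence "coeff (coeff (XY * Q) (Suc j)) (Suc i) = 0" and "coeff (coeff Q j) (Suc i) = 0"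
        using c Suc.IH by auto
      thus "coeff (coeff Q (Suc j)) i = 0" unfolding coeff_XY_mult by simp
    qed
  qed
  thus ?thesis unfolding TD_def by (meson not_le)
qed

lemma TD_XY_pow_div: "TD (XY^a * Q) D \<Longrightarrow> TD Q D"
proof (induction a)
  case (Suc a)
  have "TD (XY * (XY^a * Q)) (Suc D)" using Suc.prems TD_mono[of _ D "Suc D"] by (simp add: mult.assoc)
  hence "TD (XY^a * Q) D" by (rule TD_XY_div)
  thus ?case by (rule Suc.IH)
qed simp

lemma degree_XY: "degree (XY :: 'a::comm_ring_1 poly poly) = 1"
  by (simp add: XY_eq)

lemma lead_XY: "lead_coeff (XY :: 'a::comm_ring_1 poly poly) = -1"
  by (simp add: XY_eq)

lemma irreducible_XY: "irreducible (XY :: 'a::field poly poly)"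
proof (unfold irreducible_def, intro conjI allI impI)
  show "XY \<noteq> (0 :: 'a poly poly)" by (rule XY_nonzero)
  show "\<not> is_unit (XY :: 'a poly poly)"
  proof
    assume "is_unit (XY :: 'a poly poly)"
    then obtain c where "(XY :: 'a poly poly) = [:c:]" by (elim is_unit_polyE)
    hence "degree (XY :: 'a poly poly) = degree [:c:]" by (rule arg_cong)
    hence "degree (XY :: 'a poly poly) = 0" by simp
    thus False using degree_XY[where 'a='a] by simp
  qed
  fix P Q :: "'a poly poly" assume e: "XY = P * Q"
  hence P0: "P \<noteq> 0" and Q0: "Q \<noteq> 0" using XY_nonzero by auto
  have dsum: "degree P + degree Q = 1" using e degree_mult_eq[OF P0 Q0] degree_XY[where 'a='a] by simp
  have lc: "lead_coeff P * lead_coeff Q = -1" using arg_cong[OF e, of lead_coeff] lead_XY[where 'a='a]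
    by (simp add: lead_coeff_mult)
  show "is_unit P \<or> is_unit Q"
  proof (cases "degree Q = 0")
    case True
    then obtain c where c: "Q = [:c:]" by (rule degree_eq_zeroE)
    have "lead_coeff P * c = -1" using lc unfolding c by simp
    hence "c dvd -1" by (metis dvd_triv_right)
    hence "c dvd 1" by simp
    thus ?thesis unfolding c by (simp add: is_unit_const_poly_iff)
  next
    case False
    hence "degree P = 0" using dsum by simp
    then obtain c where c: "P = [:c:]" by (rule degree_eq_zeroE)
    have "c * lead_coeff Q = -1" using lc unfolding c by simp
    hence "c dvd -1" by (metis dvd_triv_left)
    hence "c dvd 1" by simp
    thus ?thesis unfolding c by (simp add: is_unit_const_poly_iff)
  qed
qed

lemma dvd_XY_imp:
  fixes h :: "'a::field poly poly"
  assumes "irreducible h" "h dvd XY"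
  shows "XY dvd h"
proof -
  obtain k where k: "XY = h * k" using assms(2) by (elim dvdE)
  have "is_unit h \<or> is_unit k" using irreducible_XY k by (rule irreducibleD)
  hence "is_unit k" using assms(1) irreducible_not_unit by blast
  then obtain k' where "k * k' = 1" by (elim dvdE) auto
  hence "h = XY * k'" using k by (metis mult.assoc mult.right_neutral)
  thus ?thesis by simp
qed

lemma extract_XY:
  fixes P :: "'a::field poly poly"
  assumes "P \<noteq> 0"
  shows "\<exists>a Q. P = XY^a * Q \<and> \<not> XY dvd Q"
  using assms
proof (induction "degree P" arbitrary: P rule: less_induct)
  case (less P)
  show ?case
  proof (cases "XY dvd P")
    case False
    thus ?thesis by (intro exI[of _ 0] exI[of _ P]) simp
  next
    case True
    then obtain P1 where P1: "P = XY * P1" by (elim dvdE)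
    have P10: "P1 \<noteq> 0" using less.prems P1 by auto
    have "degree P = Suc (degree P1)" unfolding P1 using degree_mult_eq[OF XY_nonzero P10] degree_XY by simp
    then obtain a Q where "P1 = XY^a * Q" "\<not> XY dvd Q" using less.hyps[of P1] P10 by auto
    thus ?thesis using P1 by (intro exI[of _ "Suc a"] exI[of _ Q]) (simp add: mult.assoc)
  qed
qed



lemma TD_coeff: "TD P D \<Longrightarrow> coeff P k \<noteq> 0 \<Longrightarrow> degree (coeff P k) + k \<le> D"
  unfolding TD_def by (metis leading_coeff_0_iff)

lemma resultant_degree_bound:
  fixes P Q :: "'a::field poly poly"
  assumes TP: "TD P DP" and TQ: "TD Q DQ"
  shows "degree (resultant P Q) \<le> DP * DQ"
proof -
  define m where "m = degree P"
  define n where "n = degree Q"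
  define N where "N = m + n"
  have mD: "m \<le> DP" "n \<le> DQ" using TD_degree[OF TP] TD_degree[OF TQ] m_def n_def by auto
  define S where "S = sylvester_mat P Q"
  define w where "w i = (if i < n then int DP - int m - int i else int DQ - int i)" for i
  have dimS: "dim_row S = N" "dim_col S = N" unfolding S_def N_def m_def n_def by auto
  have entry: "int (degree (S $$ (i,j))) \<le> w i + int j" if ij: "i < N" "j < N" "S $$ (i,j) \<noteq> 0" for i j
  proof -
    have Sij: "S $$ (i,j) = (if i < n then if i \<le> j \<and> j - i \<le> m then coeff P (m + i - j) else 0
       else if i - n \<le> j \<and> j \<le> i then coeff Q (i - j) else 0)"
      unfolding S_def m_def n_def by (rule sylvester_index_mat) (use ij in \<open>auto simp: N_def m_def n_def\<close>)
    show ?thesis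
    proof (cases "i < n")
      case True
      with ij(3) Sij have c: "i \<le> j" "j - i \<le> m" "coeff P (m + i - j) \<noteq> 0" "S $$ (i,j) = coeff P (m + i - j)"
        by (auto split: if_splits)
      have "degree (coeff P (m + i - j)) + (m + i - j) \<le> DP" by (rule TD_coeff[OF TP c(3)])
      thus ?thesis using c True unfolding w_def by simp
    next
      case False
      with ij(3) Sij have c: "i - n \<le> j" "j \<le> i" "coeff Q (i - j) \<noteq> 0" "S $$ (i,j) = coeff Q (i - j)"
        by (auto split: if_splits)
      have "degree (coeff Q (i - j)) + (i - j) \<le> DQ" by (rule TD_coeff[OF TQ c(3)])
      thus ?thesis using c False unfolding w_def by simp
    qed
  qed
  have wsum: "(\<Sum>i = 0..<N. w i + int i) = int n * (int DP - int m) + int m * int DQ"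
  proof -
    have "(\<Sum>i = 0..<N. w i + int i) = (\<Sum>i = 0..<N. if i < n then int DP - int m else int DQ)"
      by (rule sum.cong) (auto simp: w_def)
    also have "\<dots> = (\<Sum>i \<in> {0..<n}. int DP - int m) + (\<Sum>i \<in> {n..<N}. int DQ)"
    proof -
      have "{0..<N} = {0..<n} \<union> {n..<N}" "{0..<n} \<inter> {n..<N} = {}" unfolding N_def by auto
      hence "(\<Sum>i = 0..<N. if i < n then int DP - int m else int DQ) =
         (\<Sum>i \<in> {0..<n}. if i < n then int DP - int m else int DQ) + (\<Sum>i \<in> {n..<N}. if i < n then int DP - int m else int DQ)"
        by (simp add: sum.union_disjoint)
      thus ?thesis by simp
    qed
    also have "\<dots> = int n * (int DP - int m) + int m * int DQ" unfolding N_def by simp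
    finally show ?thesis .
  qed
  have bound: "int n * (int DP - int m) + int m * int DQ \<le> int DP * int DQ"
  proof -
    have "0 \<le> (int DP - int m) * (int DQ - int n)" using mD by simp
    thus ?thesis by (simp add: algebra_simps)
  qed
  have "resultant P Q = (\<Sum>p \<in> {p. p permutes {0..<N}}. signof p * (\<Prod>i = 0..<N. S $$ (i, p i)))"
    unfolding resultant_def S_def[symmetric] det_def using dimS by simp
  also have "degree \<dots> \<le> DP * DQ"
  proof (rule degree_sum_le)
    show "finite {p. p permutes {0..<N}}" by (simp add: finite_permutations)
    fix p assume "p \<in> {p. p permutes {0..<N}}"
    hence pp: "p permutes {0..<N}" by simp
    have ds: "degree (signof p :: 'a poly poly) = 0" by (simp add: sign_def)
    have "degree (signof p * (\<Prod>i = 0..<N. S $$ (i, p i))) \<le> degree (\<Prod>i = 0..<N. S $$ (i, p i))"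
      using degree_mult_le[of "signof p" "\<Prod>i = 0..<N. S $$ (i, p i)"] ds by simp
    also have "\<dots> \<le> DP * DQ"
    proof (cases "(\<Prod>i = 0..<N. S $$ (i, p i)) = 0")
      case True show ?thesis unfolding True by simp
    next
      case False
      hence nz: "S $$ (i, p i) \<noteq> 0" if "i < N" for i using that by (auto simp: prod_zero_iff)
      have pN: "p i < N" if "i < N" for i using pp that by (simp add: permutes_in_image)
      have "int (degree (\<Prod>i = 0..<N. S $$ (i, p i))) \<le> int (\<Sum>i = 0..<N. degree (S $$ (i, p i)))"
        using degree_prod_sum_le[of "{0..<N}" "\<lambda>i. S $$ (i, p i)"] by (simp add: o_def del: of_nat_sum)
      also have "\<dots> = (\<Sum>i = 0..<N. int (degree (S $$ (i, p i))))" by simp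
      also have "\<dots> \<le> (\<Sum>i = 0..<N. w i + int (p i))"
        by (rule sum_mono) (use entry nz pN in auto)
      also have "\<dots> = (\<Sum>i = 0..<N. w i) + (\<Sum>i = 0..<N. int (p i))" by (simp add: sum.distrib)
      also have "(\<Sum>i = 0..<N. int (p i)) = (\<Sum>i = 0..<N. int i)"
        using sum.reindex_bij_betw[OF permutes_imp_bij[OF pp], of int] by simp
      also have "(\<Sum>i = 0..<N. w i) + (\<Sum>i = 0..<N. int i) = (\<Sum>i = 0..<N. w i + int i)"
        by (simp add: sum.distrib)
      also have "\<dots> \<le> int DP * int DQ" using wsum bound by simp
      finally show ?thesis by (simp add: of_nat_mult[symmetric] del: of_nat_mult)
    qed
    finally show "degree (signof p * (\<Prod>i = 0..<N. S $$ (i, p i))) \<le> DP * DQ" .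
  qed
  finally show ?thesis .
qed



lemma emb_hom:
  fixes emb :: "'a::field \<Rightarrow> 'b::field"
  assumes emb_inj: "inj emb"
    and emb_add: "\<And>u v. emb (u + v) = emb u + emb v"
    and emb_mult: "\<And>u v. emb (u * v) = emb u * emb v"
    and emb_one: "emb 1 = 1"
  shows "inj_comm_ring_hom emb"
proof -
  have "emb 0 + emb 0 = emb 0" using emb_add[of 0 0] by simp
  hence e0: "emb 0 = 0" by (metis add_cancel_right_right)
  show ?thesis
  proof (unfold_locales)
    fix x y show "emb (x + y) = emb x + emb y" by (rule emb_add)
    show "emb (x * y) = emb x * emb y" by (rule emb_mult)
  next
    show "emb 1 = 1" by (rule emb_one)
  next
    fix x assume "emb x = 0" thus "x = 0" using e0 emb_inj by (metis injD)
  qed (rule e0)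
qed

lemma phi_hom:
  assumes "comm_ring_hom emb"
  shows "comm_ring_hom (\<lambda>c. poly (map_poly emb c) r)"
proof -
  interpret E: map_poly_comm_ring_hom emb by (rule map_poly_comm_ring_hom.intro, fact)
  show ?thesis by unfold_locales (simp_all add: hom_distribs)
qed

lemma eval_XY:
  assumes "comm_ring_hom emb"
  shows "poly (map_poly (\<lambda>c. poly (map_poly emb c) r) XY) r' = r - r'"
proof -
  interpret E: map_poly_comm_ring_hom emb by (rule map_poly_comm_ring_hom.intro, fact)
  interpret P: comm_ring_hom "\<lambda>c. poly (map_poly emb c) r" by (rule phi_hom, fact)
  interpret MP: map_poly_comm_ring_hom "\<lambda>c. poly (map_poly emb c) r"
    by (rule map_poly_comm_ring_hom.intro, rule P.comm_ring_hom_axioms)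
  show ?thesis unfolding XY_eq by (simp add: hom_distribs)
qed

lemma eval_in_x:
  assumes "comm_ring_hom emb"
  shows "poly (map_poly (\<lambda>c. poly (map_poly emb c) r) (in_x g)) r' = poly (map_poly emb g) r"
proof -
  interpret P: comm_ring_hom "\<lambda>c. poly (map_poly emb c) r" by (rule phi_hom, fact)
  show ?thesis unfolding in_x_def by (simp add: hom_distribs)
qed

lemma eval_in_y:
  assumes "comm_ring_hom emb"
  shows "poly (map_poly (\<lambda>c. poly (map_poly emb c) r) (in_y g)) r' = poly (map_poly emb g) r'"
proof -
  interpret E: map_poly_comm_ring_hom emb by (rule map_poly_comm_ring_hom.intro, fact)
  have "map_poly (\<lambda>c. poly (map_poly emb c) r) (in_y g) = map_poly ((\<lambda>c. poly (map_poly emb c) r) \<circ> (\<lambda>c. [:c:])) g"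
    unfolding in_y_def by (rule map_poly_map_poly) simp
  also have "(\<lambda>c. poly (map_poly emb c) r) \<circ> (\<lambda>c. [:c:]) = emb" by (rule ext) (simp add: hom_distribs)
  finally show ?thesis by simp
qed

lemma eval_tilde:
  fixes g :: "'a::field poly" and emb :: "'a \<Rightarrow> 'b::field"
  assumes "comm_ring_hom emb"
  shows "(r - r') * poly (map_poly (\<lambda>c. poly (map_poly emb c) r) (tilde g)) r' =
     poly (map_poly emb g) r - poly (map_poly emb g) r'"
proof -
  interpret P: comm_ring_hom "\<lambda>c. poly (map_poly emb c) r" by (rule phi_hom, fact)
  interpret MP: map_poly_comm_ring_hom "\<lambda>c. poly (map_poly emb c) r"
    by (rule map_poly_comm_ring_hom.intro, rule P.comm_ring_hom_axioms)
  let ?M = "map_poly (\<lambda>c. poly (map_poly emb c) r)"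
  have "?M (XY * tilde g) = ?M (in_x g - in_y g)" unfolding tilde_eq XY_mult_tl2 ..
  hence "poly (?M XY * ?M (tilde g)) r' = poly (?M (in_x g) - ?M (in_y g)) r'"
    by (simp add: hom_distribs)
  thus ?thesis using eval_XY[OF assms] eval_in_x[OF assms] eval_in_y[OF assms] by simp
qed



lemma coeff_in_x: "coeff (in_x g) j = (if j = 0 then g else 0)"
  by (simp add: in_x_def coeff_pCons split: nat.splits)

theorem mainTheorem4:
  fixes f :: "'a::{field, finite} poly"
    and emb :: "'a \<Rightarrow> 'b::field"
  assumes emb_inj: "inj emb"
    and emb_add: "\<And>u v. emb (u + v) = emb u + emb v"
    and emb_mult: "\<And>u v. emb (u * v) = emb u * emb v"
    and emb_one: "emb 1 = 1"
    and alg_closed: "\<And>p :: 'b poly. degree p \<ge> 1 \<Longrightarrow> \<exists>z. poly p z = 0"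
    and algebraic: "\<And>z :: 'b. \<exists>p :: 'a poly. p \<noteq> 0 \<and> poly (map_poly emb p) z = 0"
    and monic: "lead_coeff f = 1"
    and d_def: "degree f = d"
    and D2: "hasse_deriv 2 f \<noteq> 0"
    and deg_f': "degree (pderiv f) \<ge> 1"
    and no_common: "\<And>h :: 'a poly poly. irreducible h \<Longrightarrow>
        h dvd (tilde f - in_x (pderiv f)) \<Longrightarrow> h dvd tilde (pderiv f) \<Longrightarrow>
        h dvd (bvar_x - bvar_y)"
  shows "finite {s :: 'b. \<not> (\<exists>b :: 'b.
            let g = map_poly emb f + [: b, s :] in
            (\<exists>r. order r g = 2 \<and> (\<forall>r'. r' \<noteq> r \<longrightarrow> order r' g \<le> 1)) \<and>
            card {r. poly g r = 0 \<and> order r g = 1} = d - 2)}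
       \<and> card {s :: 'b. \<not> (\<exists>b :: 'b.
            let g = map_poly emb f + [: b, s :] in
            (\<exists>r. order r g = 2 \<and> (\<forall>r'. r' \<noteq> r \<longrightarrow> order r' g \<le> 1)) \<and>
            card {r. poly g r = 0 \<and> order r g = 1} = d - 2)} \<le> d^2 - 2*d"
proof -
  have ehom: "inj_comm_ring_hom emb" by (rule emb_hom[OF emb_inj emb_add emb_mult emb_one])
  interpret E: inj_comm_ring_hom emb by (rule ehom)
  interpret E2: idom_hom emb by (rule idom_hom.intro, rule E.comm_ring_hom_axioms)
  have chom: "comm_ring_hom emb" by (rule E.comm_ring_hom_axioms)
  interpret EM: map_poly_comm_ring_hom emb by (rule map_poly_comm_ring_hom.intro, rule chom)
  define f' where "f' = pderiv f"
  define e where "e = degree f'"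
  have e1: "e \<ge> 1" using deg_f' unfolding e_def f'_def .
  have ed: "e \<le> d - 1"
  proof -
    have "degree f' \<le> degree f - 1"
      by (rule degree_le) (auto simp: f'_def coeff_pderiv coeff_eq_0)
    thus ?thesis using d_def e_def by simp
  qed
  have d2: "d \<ge> 2" using e1 ed by simp
  have f'0: "f' \<noteq> 0" using e1 e_def by (metis degree_0 not_one_le_zero)
  have f0: "f \<noteq> 0" using d2 d_def by auto
  define A where "A = tilde f - in_x f'"
  define B where "B = tilde f'"
  have coeffA: "coeff (coeff A j) i = coeff f (i+j+1) - (if j = 0 then coeff f' i else 0)" for i j
    by (simp add: A_def coeff_tilde coeff_in_x)
  have TDA: "TD A (d - 1)"
    unfolding TD_def
  proof (intro allI impI)
    fix i j assume nz: "coeff (coeff A j) i \<noteq> 0"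
    show "i + j \<le> d - 1"
    proof (cases "coeff f (i+j+1) = 0")
      case True
      hence "j = 0" "coeff f' i \<noteq> 0" using nz unfolding coeffA by (auto split: if_splits)
      hence "i \<le> e" unfolding e_def by (simp add: le_degree)
      thus ?thesis using ed \<open>j = 0\<close> by simp
    next
      case False
      hence "i + j + 1 \<le> d" using le_degree d_def by blast
      thus ?thesis by simp
    qed
  qed
  have cA_top: "coeff A (d - 1) = 1"
  proof -
    have "coeff (tilde f) (d - 1) = [:1:]" using coeff_tilde_top[of f] d_def d2 monic by simp
    moreover have "d - 1 \<noteq> 0" using d2 by simp
    ultimately have "coeff A (d - 1) = [:1:]" by (simp add: A_def coeff_in_x)
    thus ?thesis by (metis one_pCons)
  qed
  have A0: "A \<noteq> 0" using cA_top by auto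
  have degA: "degree A = d - 1"
  proof -
    have "degree A \<le> d - 1" using TD_degree[OF TDA] .
    moreover have "degree A \<ge> d - 1" using cA_top by (intro le_degree) simp
    ultimately show ?thesis by simp
  qed
  have lcA: "lead_coeff A = 1" using degA cA_top by simp
  obtain a A' where AA': "A = XY^a * A'" and nd: "\<not> XY dvd A'" using extract_XY[OF A0] by blast
  have TDA': "TD A' (d - 1)" using TDA AA' TD_XY_pow_div by metis
  have lcA': "lead_coeff A' = (-1)^a"
  proof -
    have "1 = (-1)^a * lead_coeff A'" using lcA AA' by (simp add: lead_coeff_mult lead_coeff_power lead_XY)
    hence "(-1)^a * 1 = (-1)^a * ((-1)^a * lead_coeff A')" by simp
    also have "\<dots> = lead_coeff A'" by (simp flip: mult.assoc power_mult_distrib)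
    finally show ?thesis by simp
  qed
  have TDB: "TD B (d - 2)"
    using TD_mono[OF TD_tilde[of f']] ed unfolding B_def e_def by simp
  have lcB: "lead_coeff B = [:lead_coeff f':]" unfolding B_def using lead_tilde[of f'] e1 e_def by simp
  define R where "R = resultant A' B"
  have R0: "R \<noteq> 0" unfolding R_def
  proof (rule resultant_nonzero_no_common)
    fix h assume h: "irreducible h" "h dvd A'" "h dvd B"
    have "h dvd A" using h(2) AA' by simp
    hence "h dvd XY" using no_common[OF h(1)] h(3) unfolding A_def B_def f'_def XY_def by blast
    hence "XY dvd h" using dvd_XY_imp h(1) by blast
    thus False using h(2) nd dvd_trans by blast
  qed
  have degR: "degree R \<le> (d - 1) * (d - 2)" unfolding R_def by (rule resultant_degree_bound[OF TDA' TDB])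
  define P where "P = hasse_deriv 2 f * R"
  have P0: "P \<noteq> 0" using D2 R0 P_def by simp
  have degP: "degree P \<le> d^2 - 2*d"
  proof -
    have "degree P \<le> degree (hasse_deriv 2 f) + degree R" unfolding P_def by (rule degree_mult_le)
    also have "\<dots> \<le> (d - 2) + (d - 1) * (d - 2)" using degree_hasse[of 2 f] d_def degR by simp
    also have "\<dots> = d^2 - 2*d"
    proof -
      obtain k where k: "d = k + 2" using d2 by (metis add.commute le_Suc_ex)
      show ?thesis unfolding k by (simp add: power2_eq_square algebra_simps)
    qed
    finally show ?thesis .
  qed
  define Pb where "Pb = map_poly emb P"
  have Pb0: "Pb \<noteq> 0" using P0 Pb_def by simp
  have degPb: "degree Pb = degree P" unfolding Pb_def by simp
  define fb where "fb = map_poly emb f"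
  define fb' where "fb' = map_poly emb f'"
  have pfb: "pderiv fb = fb'" unfolding fb_def fb'_def f'_def by (simp add: E2.map_poly_pderiv)
  have dfb: "degree fb = d" using d_def fb_def by simp
  have dfb': "degree fb' = e" using e_def fb'_def by simp
  define BAD where "BAD = {s :: 'b. \<not> (\<exists>b :: 'b.
            let g = map_poly emb f + [: b, s :] in
            (\<exists>r. order r g = 2 \<and> (\<forall>r'. r' \<noteq> r \<longrightarrow> order r' g \<le> 1)) \<and>
            card {r. poly g r = 0 \<and> order r g = 1} = d - 2)}"
  define IM where "IM = (\<lambda>r. - poly fb' r) ` {r. poly Pb r = 0}"
  have sub: "BAD \<subseteq> IM"
  proof
    fix s assume sB: "s \<in> BAD"
    show "s \<in> IM"
    proof (rule ccontr)
      assume ns: "s \<notin> IM"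
      have "degree (fb' + [:s:]) = e" using dfb' e1 by (subst degree_add_eq_left) auto
      then obtain r where "poly (fb' + [:s:]) r = 0" using alg_closed e1 by metis
      hence fr: "poly fb' r = -s" by (simp add: eq_neg_iff_add_eq_0)
      have Pr: "poly Pb r \<noteq> 0"
      proof
        assume "poly Pb r = 0"
        hence "- poly fb' r \<in> IM" unfolding IM_def by blast
        thus False using ns fr by simp
      qed
      have Dr: "poly (map_poly emb (hasse_deriv 2 f)) r \<noteq> 0"
        and Rr: "poly (map_poly emb R) r \<noteq> 0"
        using Pr unfolding Pb_def P_def by (auto simp: hom_distribs)
      define b where "b = - (poly fb r + s * r)"
      define g where "g = fb + [:b, s:]"
      have dg: "degree g = d" unfolding g_def using dfb d2 by (subst degree_add_eq_left) auto
      have g0: "g \<noteq> 0" using dg d2 by auto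
      have gr: "poly g r = 0" unfolding g_def b_def by (simp add: algebra_simps)
      have pg: "pderiv g = fb' + [:s:]" unfolding g_def by (simp add: pderiv_add pderiv_pCons pfb)
      have pgr: "poly (pderiv g) r = 0" unfolding pg using fr by simp
      have o2: "2 \<le> order r g" by (rule order_ge2I[OF g0 gr pgr])
      have o3: "\<not> 3 \<le> order r g"
      proof
        assume "3 \<le> order r g"
        hence c0: "coeff (pcompose g [:r,1:]) 2 = 0" by (rule order_ge3D[OF g0])
        have "degree (pcompose [:b,s:] [:r,1:]) \<le> 1"
          using degree_pcompose_le[of "[:b,s:]" "[:r,1:]"] by simp
        hence "coeff (pcompose [:b,s:] [:r,1:]) 2 = 0" by (intro coeff_eq_0) simp
        hence "coeff (pcompose fb [:r,1:]) 2 = 0" using c0 unfolding g_def by (simp add: pcompose_add)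
        hence "poly (hasse_deriv 2 fb) r = 0" by (simp add: taylor_hasse)
        thus False using Dr unfolding fb_def hasse_map[OF chom] by simp
      qed
      have ord_r: "order r g = 2" using o2 o3 by simp
      define phi where "phi = (\<lambda>c. poly (map_poly emb c) r)"
      interpret PH: comm_ring_hom phi unfolding phi_def by (rule phi_hom[OF chom])
      have others: "order r' g \<le> 1" if rr: "r' \<noteq> r" for r'
      proof (rule ccontr)
        assume "\<not> order r' g \<le> 1"
        hence "2 \<le> order r' g" by simp
        from order_ge2D[OF g0 this] have gr': "poly g r' = 0" and pgr': "poly (pderiv g) r' = 0" by auto
        have fr': "poly fb' r' = -s" using pgr' unfolding pg by (simp add: eq_neg_iff_add_eq_0)
        have fbr': "poly fb r' = - (b + s * r')" using gr' unfolding g_def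
          by (simp add: eq_neg_iff_add_eq_0 algebra_simps)
        have rr0: "r - r' \<noteq> 0" using rr by simp
        let ?ev = "\<lambda>Q. poly (map_poly phi Q) r'"
        have evT: "?ev (tilde f) = -s"
        proof -
          have "(r - r') * ?ev (tilde f) = poly fb r - poly fb r'"
            using eval_tilde[OF chom, of r r' f] unfolding phi_def fb_def .
          also have "\<dots> = (r - r') * (-s)" unfolding fbr' b_def by (simp add: algebra_simps)
          finally have "(r - r') * ?ev (tilde f) = (r - r') * (-s)" .
          thus ?thesis using rr0 mult_left_cancel by blast
        qed
        have evB: "?ev B = 0"
        proof -
          have "(r - r') * ?ev B = poly fb' r - poly fb' r'"
            using eval_tilde[OF chom, of r r' f'] unfolding phi_def fb'_def B_def .
          also have "\<dots> = 0" using fr fr' by simp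
          finally show ?thesis using rr0 by simp
        qed
        interpret MPH: map_poly_comm_ring_hom phi by (rule map_poly_comm_ring_hom.intro, rule PH.comm_ring_hom_axioms)
        have evA: "?ev A = 0"
        proof -
          have "?ev (in_x f') = poly fb' r" using eval_in_x[OF chom, where r=r and r'=r' and g=f'] unfolding phi_def fb'_def .
          thus ?thesis unfolding A_def using evT fr by (simp add: hom_distribs)
        qed
        have "?ev A = (r - r')^a * ?ev A'"
          unfolding AA' using eval_XY[OF chom, of r r'] unfolding phi_def[symmetric] by (simp add: hom_distribs)
        hence evA': "?ev A' = 0" using evA rr0 by simp
        have phi_lcA': "phi (lead_coeff A') \<noteq> 0" unfolding lcA' phi_def by (simp add: hom_distribs)
        have phi_lcB: "phi (lead_coeff B) \<noteq> 0" unfolding lcB phi_def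
          using f'0 by (simp add: hom_distribs)
        have dA': "degree (map_poly phi A') = degree A'"
        proof (rule antisym)
          show "degree (map_poly phi A') \<le> degree A'" by (rule degree_map_poly_le)
          show "degree A' \<le> degree (map_poly phi A')" using phi_lcA' by (intro le_degree) simp
        qed
        have dB: "degree (map_poly phi B) = degree B"
        proof (rule antisym)
          show "degree (map_poly phi B) \<le> degree B" by (rule degree_map_poly_le)
          show "degree B \<le> degree (map_poly phi B)" using phi_lcB by (intro le_degree) simp
        qed
        have mA0: "map_poly phi A' \<noteq> 0"
        proof
          assume "map_poly phi A' = 0"
          hence "coeff (map_poly phi A') (degree A') = 0" by simp
          thus False using phi_lcA' by (simp add: PH.coeff_map_poly_hom)
        qed
        have "resultant (map_poly phi A') (map_poly phi B) = 0"
          by (rule resultant_common_root[OF mA0 evA' evB])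
        hence "phi R = 0" unfolding R_def using PH.resultant_map_poly[OF dA' dB] by simp
        thus False using Rr unfolding phi_def by simp
      qed
      define Z where "Z = {z. poly g z = 0}"
      have fZ: "finite Z" unfolding Z_def using poly_roots_finite[OF g0] .
      have rZ: "r \<in> Z" unfolding Z_def using gr by simp
      have o1: "order z g = 1" if "z \<in> Z - {r}" for z
      proof -
        have "order z g \<noteq> 0" using that g0 unfolding Z_def by (simp add: order_root)
        thus ?thesis using others[of z] that by simp
      qed
      have "d = (\<Sum>z\<in>Z. order z g)" using sum_orders_alg_closed[OF alg_closed g0] dg unfolding Z_def by simp
      also have "\<dots> = order r g + (\<Sum>z\<in>Z - {r}. order z g)" using fZ rZ by (simp add: sum.remove)
      also have "(\<Sum>z\<in>Z - {r}. order z g) = (\<Sum>z\<in>Z - {r}. 1)" by (rule sum.cong) (simp_all add: o1)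
      finally have "d = 2 + card (Z - {r})" using ord_r by simp
      moreover have "{z. poly g z = 0 \<and> order z g = 1} = Z - {r}"
        using o1 ord_r unfolding Z_def by auto
      ultimately have card: "card {z. poly g z = 0 \<and> order z g = 1} = d - 2" by simp
      have "\<exists>b :: 'b. let g = map_poly emb f + [: b, s :] in
            (\<exists>r. order r g = 2 \<and> (\<forall>r'. r' \<noteq> r \<longrightarrow> order r' g \<le> 1)) \<and>
            card {r. poly g r = 0 \<and> order r g = 1} = d - 2"
        using ord_r others card unfolding g_def fb_def Let_def by blast
      thus False using sB unfolding BAD_def by blast
    qed
  qed
  have fIM: "finite IM" unfolding IM_def using poly_roots_finite[OF Pb0] by simp
  have "card IM \<le> card {r. poly Pb r = 0}" unfolding IM_def by (rule card_image_le) (rule poly_roots_finite[OF Pb0])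
  also have "\<dots> \<le> degree Pb" by (rule card_poly_roots_bound[OF Pb0])
  finally have cIM: "card IM \<le> d^2 - 2*d" using degPb degP by simp
  have "finite BAD" using finite_subset[OF sub fIM] .
  moreover have "card BAD \<le> d^2 - 2*d" using card_mono[OF fIM sub] cIM by simp
  ultimately show ?thesis unfolding BAD_def by blast
qed


end
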